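(* Suppose $\mathcal S$ satisfies Tuy's condition with respect to $M$. Then the canonical relation $C_I$ satisfies: (1) the maps $C_I\to M$ and $C_I\to\mathcal M$ (base projections) have surjective differentials; (2) the projections $\pi_M:C_I\to T^*M$ and $\pi_{\mathcal M}:C_I\to T^*\mathcal M$ have constant rank. Moreover $\mathrm{rank}(d\pi_M)-\dim M=\mathrm{rank}(d\pi_{\mathcal M})-\dim\mathcal M=3$.
   Context: Standing setup. $M\subset\mathbb R^3$ is an open domain and $\mathcal S\subset\mathbb R^3$ is a smooth regular embedded surface without boundary lying at positive distance from $\overline M$. Fix $0\le\epsilon<\pi/4$, $\mathcal M=\mathcal S\times S^2\times(\epsilon,\pi/2-\epsilon)$ (dimension 5). Let $\varphi(u,\beta,\phi,z)=(z-u)\cdot\beta-|z-u|\cos\phi$. Coordinates: $u=u(v^1,v^2)$ locally on $\mathcal S$, $J_1=(\partial_{v^1}u,\partial_{v^2}u)$; $\beta=(\sin\theta\cos\psi,\sin\theta\sin\psi,\cos\theta)$, $J_2=(\partial_\theta\beta,\partial_\psi\beta)$; covectors on $\mathcal M$ are $(\hat u,\hat\beta,\hat\phi)$. Canonical relation: $C_I=\{(u,\beta,\phi,\hat u,\hat\beta,\hat\phi;z,\zeta):\varphi=0,\ \lambda\neq0,\ \zeta=-\lambda(\beta-\frac{z-u}{|z-u|}\cos\phi),\ \hat u=J_1^T\zeta,\ \hat\beta=\lambda J_2^T(z-u),\ \hat\phi=\lambda|z-u|\sin\phi\}$; $\pi_M,\pi_{\mathcal M}$ are the natural projections to $T^*M$,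 $T^*\mathcal M$. Accessibility / Tuy's condition: for $(z,\zeta)\in T^*M\setminus0$, $H_{(z,\zeta)}=\{y:(y-z)\cdot\zeta=0\}$; $(z,\zeta)$ is accessible if $H_{(z,\zeta)}\cap\mathcal S\neq\emptyset$ and for every $u\in H_{(z,\zeta)}\cap\mathcal S$, $\zeta$ is not orthogonal to $T_u\mathcal S$; Tuy's condition means every $(z,\zeta)\in T^*M\setminus0$ is accessible. *)

theory Defs
  imports "HOL-Analysis.Analysis"
begin

fun iter_pd :: "'n::finite list \<Rightarrow> (real^'n \<Rightarrow> 'b::real_normed_vector) \<Rightarrow> real^'n \<Rightarrow> 'b" where
  "iter_pd [] f = f"
| "iter_pd (i # is) f = (\<lambda>x. frechet_derivative (iter_pd is f) (at x) (axis i 1))"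

definition smooth_on :: "(real^'n::finite) set \<Rightarrow> (real^'n \<Rightarrow> 'b::real_normed_vector) \<Rightarrow> bool" where
  "smooth_on U f \<longleftrightarrow> open U \<and> (\<forall>is. \<forall>x\<in>U. iter_pd is f differentiable (at x))"

definition surface_chart :: "(real^3) set \<Rightarrow> (real^2) set \<Rightarrow> (real^2 \<Rightarrow> real^3) \<Rightarrow> bool" where
  "surface_chart S U u \<longleftrightarrow> open U \<and> smooth_on U u \<and> u ` U \<subseteq> S
     \<and> openin (top_of_set S) (u ` U)
     \<and> (\<exists>g. homeomorphism U (u ` U) u g)
     \<and> (\<forall>v\<in>U. inj (frechet_derivative u (at v)))"

definition regular_surface :: "(real^3) set \<Rightarrow> bool" where
  "regular_surface S \<longleftrightarrow> (\<forall>x\<in>S. \<exists>U u. surface_chart S U u \<and> x \<in> u ` U)"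

text \<open>Tangent vectors of a set A at x: velocities at 0 of curves through x lying in A.
  For a C^1 submanifold this is exactly the tangent space.\<close>
definition tangent_vectors :: "'a::real_normed_vector set \<Rightarrow> 'a \<Rightarrow> 'a set" where
  "tangent_vectors A x = {w. \<exists>\<gamma> e. e > 0 \<and> \<gamma> 0 = x \<and> (\<forall>t. \<bar>t\<bar> < e \<longrightarrow> \<gamma> t \<in> A)
       \<and> (\<gamma> has_vector_derivative w) (at 0)}"

definition hyperplane_H :: "real^3 \<Rightarrow> real^3 \<Rightarrow> (real^3) set" where
  "hyperplane_H z \<zeta> = {y. (y - z) \<bullet> \<zeta> = 0}"

definition accessible :: "(real^3) set \<Rightarrow> real^3 \<Rightarrow> real^3 \<Rightarrow> bool" where
  "accessible S z \<zeta> \<longleftrightarrow> hyperplane_H z \<zeta> \<inter> S \<noteq> {}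
     \<and> (\<forall>u \<in> hyperplane_H z \<zeta> \<inter> S. \<not> (\<forall>t \<in> tangent_vectors S u. \<zeta> \<bullet> t = 0))"

definition tuy_condition :: "(real^3) set \<Rightarrow> (real^3) set \<Rightarrow> bool" where
  "tuy_condition S M \<longleftrightarrow> (\<forall>z\<in>M. \<forall>\<zeta>. \<zeta> \<noteq> 0 \<longrightarrow> accessible S z \<zeta>)"

definition phase :: "real^3 \<Rightarrow> real^3 \<Rightarrow> real \<Rightarrow> real^3 \<Rightarrow> real" where
  "phase u \<beta> \<phi> z = (z - u) \<bullet> \<beta> - norm (z - u) * cos \<phi>"

definition JT :: "(real^2 \<Rightarrow> real^3) \<Rightarrow> real^2 \<Rightarrow> real^3 \<Rightarrow> real^2" where
  "JT f v y = (\<chi> i. frechet_derivative f (at v) (axis i 1) \<bullet> y)"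

text \<open>The canonical relation C_I written in local coordinates: a chart u on U of S
  (coordinates v) and a chart b on W of the unit sphere (coordinates w), phi the
  third coordinate of the 5-manifold. Points are
  ((v,w,phi), (uhat,betahat,phihat), (z,zeta)), i.e. point of T*calM then point of T*M.\<close>
definition CI_coords :: "(real^3) set \<Rightarrow> real \<Rightarrow> (real^2) set \<Rightarrow> (real^2 \<Rightarrow> real^3)
     \<Rightarrow> (real^2) set \<Rightarrow> (real^2 \<Rightarrow> real^3)
     \<Rightarrow> ((((real^2) \<times> (real^2) \<times> real) \<times> ((real^2) \<times> (real^2) \<times> real)) \<times> ((real^3) \<times> (real^3))) set" where
  "CI_coords M \<epsilon> U u W b =
    {(((v, w, \<phi>), (uh, bh, \<phi>h)), (z, \<zeta>)) | v w \<phi> uh bh \<phi>h z \<zeta> lam.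
       v \<in> U \<and> w \<in> W \<and> \<phi> \<in> {\<epsilon> <..< pi/2 - \<epsilon>} \<and> z \<in> M \<and>
       phase (u v) (b w) \<phi> z = 0 \<and> lam \<noteq> 0 \<and>
       \<zeta> = - lam *\<^sub>R (b w - (cos \<phi> / norm (z - u v)) *\<^sub>R (z - u v)) \<and>
       uh = JT u v \<zeta> \<and>
       bh = lam *\<^sub>R JT b w (z - u v) \<and>
       \<phi>h = lam * norm (z - u v) * sin \<phi>}"

end

theory Submission
  imports Defs
begin

lemma has_derivative_norm_chain[derivative_intros]:
  assumes "(f has_derivative f') (at x within s)" "f x \<noteq> 0"
  shows "((\<lambda>y. norm (f y)) has_derivative (\<lambda>h. sgn (f x) \<bullet> f' h)) (at x within s)"
  using has_derivative_compose[OF assms(1) has_derivative_norm[OF assms(2)]] by (simp add: o_def inner_commute)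

definition fd :: "(real^2 \<Rightarrow> real^3) \<Rightarrow> real^2 \<Rightarrow> 2 \<Rightarrow> real^3" where
  "fd f v i = frechet_derivative f (at v) (axis i 1)"

lemma JT_eq: "JT f v y = (fd f v 1 \<bullet> y) *\<^sub>R axis 1 1 + (fd f v 2 \<bullet> y) *\<^sub>R axis 2 1"
  unfolding JT_def fd_def by (auto simp: vec_eq_iff forall_2 axis_def)

type_synonym par = "(real^2) \<times> (real^2) \<times> real \<times> (real^3)"

definition rr :: "(real^2 \<Rightarrow> real^3) \<Rightarrow> par \<Rightarrow> real^3" where
  "rr u q = snd (snd (snd q)) - u (fst q)"
definition rat :: "(real^2 \<Rightarrow> real^3) \<Rightarrow> (real^2 \<Rightarrow> real^3) \<Rightarrow> par \<Rightarrow> real" where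
  "rat u b q = (rr u q \<bullet> b (fst (snd q))) / norm (rr u q)"
definition Fzeta :: "(real^2 \<Rightarrow> real^3) \<Rightarrow> (real^2 \<Rightarrow> real^3) \<Rightarrow> par \<Rightarrow> real^3" where
  "Fzeta u b q = - fst (snd (snd q)) *\<^sub>R (b (fst (snd q)) - (rat u b q / norm (rr u q)) *\<^sub>R rr u q)"
definition Fmap where
  "Fmap u b q = (((fst q, fst (snd q), arccos (rat u b q)),
       (JT u (fst q) (Fzeta u b q), fst (snd (snd q)) *\<^sub>R JT b (fst (snd q)) (rr u q),
        fst (snd (snd q)) * norm (rr u q) * sin (arccos (rat u b q)))),
     (snd (snd (snd q)), Fzeta u b q))"

lemma chain_fst: "(u has_derivative Du) (at (fst p)) \<Longrightarrow>
   ((\<lambda>q. u (fst q)) has_derivative (\<lambda>h. Du (fst h))) (at p within s)"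
  using has_derivative_compose[OF has_derivative_fst[OF has_derivative_ident], of u Du p s]
  by (auto simp: o_def intro: has_derivative_at_withinI)

lemma chain_fst_snd: "(u has_derivative Du) (at (fst (snd p))) \<Longrightarrow>
   ((\<lambda>q. u (fst (snd q))) has_derivative (\<lambda>h. Du (fst (snd h)))) (at p within s)"
  using has_derivative_compose[OF has_derivative_fst[OF has_derivative_snd[OF has_derivative_ident]], of u Du p s]
  by (auto simp: o_def intro: has_derivative_at_withinI)

lemma Fmap_diff:
  assumes u: "(u has_derivative Du) (at (fst p))"
    and b: "(b has_derivative Db) (at (fst (snd p)))"
    and u1: "\<And>i. ((\<lambda>v. fd u v i) has_derivative Du2 i) (at (fst p))"
    and b1: "\<And>i. ((\<lambda>v. fd b v i) has_derivative Db2 i) (at (fst (snd p)))"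
    and r0: "rr u p \<noteq> 0" and rat0: "-1 < rat u b p" "rat u b p < 1"
  shows "\<exists>D. (Fmap u b has_derivative D) (at p)"
proof -
  note [derivative_intros] = chain_fst[OF u] chain_fst_snd[OF b] chain_fst[OF u1] chain_fst_snd[OF b1]
  have rr: "(rr u has_derivative (\<lambda>h. snd (snd (snd h)) - Du (fst h))) (at p)"
    unfolding rr_def by (auto intro!: derivative_eq_intros)
  note [derivative_intros] = rr
  have "\<exists>D. (rat u b has_derivative D) (at p)"
    unfolding rat_def using r0 by (intro exI) (auto intro!: derivative_intros)
  then obtain Dr where [derivative_intros]: "(rat u b has_derivative Dr) (at p)" by blast
  have "\<exists>D. (Fzeta u b has_derivative D) (at p)"
    unfolding Fzeta_def using r0
    by (intro exI) (rule derivative_intros | simp)+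
  then obtain Dz where [derivative_intros]: "(Fzeta u b has_derivative Dz) (at p)" by blast
  show ?thesis
    unfolding Fmap_def JT_eq using rat0 r0 by (intro exI) (rule derivative_intros | simp)+
qed

lemma cont_ball:
  fixes f :: "'a::metric_space \<Rightarrow> 'b::topological_space"
  assumes "isCont f x" "open Opn" "f x \<in> Opn"
  shows "\<exists>d>0. \<forall>y. dist y x < d \<longrightarrow> f y \<in> Opn"
proof -
  have "eventually (\<lambda>y. f y \<in> Opn) (at x)"
    using assms unfolding isCont_def by (rule topological_tendstoD)
  hence "eventually (\<lambda>y. f y \<in> Opn) (nhds x)" using assms(3) by (simp add: eventually_nhds_conv_at)
  thus ?thesis unfolding eventually_nhds_metric by (auto simp: dist_commute)
qed

lemma tangency:
  assumes ch: "surface_chart S U u" and v0: "v0 \<in> U"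
    and perp: "\<And>h. frechet_derivative u (at v0) h \<bullet> \<zeta> = 0"
    and wt: "wv \<in> tangent_vectors S (u v0)"
  shows "\<zeta> \<bullet> wv = 0"
proof -
  define L where "L = frechet_derivative u (at v0)"
  obtain g where hom: "homeomorphism U (u ` U) u g" using ch unfolding surface_chart_def by blast
  obtain Ov where Ov: "open Ov" "u ` U = S \<inter> Ov" using ch unfolding surface_chart_def openin_open by blast
  have "iter_pd [] u differentiable (at v0)" using ch v0 unfolding surface_chart_def smooth_on_def by blast
  hence uder: "(u has_derivative L) (at v0)" unfolding L_def by (simp add: frechet_derivative_works)
  have linL: "linear L" using uder has_derivative_linear by blast
  have "inj L" using ch v0 unfolding surface_chart_def L_def by blast
  then obtain m where m: "m > 0" "\<And>h. m * norm h \<le> norm (L h)"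
    using linear_inj_bounded_below_pos[OF linL] by blast
  obtain \<gamma> e where ge: "e > 0" "\<gamma> 0 = u v0" "\<And>t. \<bar>t\<bar> < e \<Longrightarrow> \<gamma> t \<in> S"
      "(\<gamma> has_vector_derivative wv) (at 0)"
    using wt unfolding tangent_vectors_def by blast
  have gder: "(\<gamma> has_derivative (\<lambda>t. t *\<^sub>R wv)) (at 0)" using ge(4) by (simp add: has_vector_derivative_def)
  have gcont: "isCont \<gamma> 0" using ge(4) has_vector_derivative_continuous by blast
  have gcon: "continuous_on (u ` U) g" and gu: "\<And>x. x \<in> U \<Longrightarrow> g (u x) = x"
    and ug: "\<And>y. y \<in> u ` U \<Longrightarrow> u (g y) = y" and gU: "g ` (u ` U) = U"
    using hom unfolding homeomorphism_def by auto
  have u0Ov: "u v0 \<in> Ov" using Ov v0 by auto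
  define f where "f t = \<zeta> \<bullet> \<gamma> t" for t
  have fder1: "(f has_derivative (\<lambda>t. t * (\<zeta> \<bullet> wv))) (at 0)"
    unfolding f_def using gder by (auto intro!: derivative_eq_intros)
  have fder2: "(f has_derivative (\<lambda>t. 0)) (at 0)"
    unfolding has_derivative_at_alt
  proof (intro conjI allI impI)
    show "bounded_linear (\<lambda>t::real. 0::real)" by simp
    fix \<epsilon> :: real assume \<epsilon>: "\<epsilon> > 0"
    define K where "K = (norm \<zeta> + 1) * (norm wv + 1) * 2 / m"
    have K: "K > 0" unfolding K_def using m(1) by (intro divide_pos_pos mult_pos_pos) (auto intro: add_nonneg_pos)
    define \<epsilon>1 where "\<epsilon>1 = min (m/2) (\<epsilon> / K)"
    have e1: "\<epsilon>1 > 0" "\<epsilon>1 \<le> m/2" "\<epsilon>1 * K \<le> \<epsilon>" unfolding \<epsilon>1_def using m \<epsilon> K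
      by (auto simp: min_def field_simps)
    obtain d1 where d1: "d1 > 0" "\<And>v. norm (v - v0) < d1 \<Longrightarrow> norm (u v - u v0 - L (v - v0)) \<le> \<epsilon>1 * norm (v - v0)"
      using uder e1(1) unfolding has_derivative_at_alt by blast
    obtain d2 where d2: "d2 > 0" "\<And>y. y \<in> u ` U \<Longrightarrow> dist y (u v0) < d2 \<Longrightarrow> dist (g y) (g (u v0)) < d1"
      using gcon imageI[OF v0, of u] d1(1) unfolding continuous_on_iff by blast
    obtain d3 where d3: "d3 > 0" "\<And>t. dist t 0 < d3 \<Longrightarrow> dist (\<gamma> t) (\<gamma> 0) < d2"
      using gcont d2(1) unfolding continuous_at_eps_delta by blast
    obtain d4 where d4: "d4 > 0" "\<And>t. dist t 0 < d4 \<Longrightarrow> \<gamma> t \<in> Ov"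
    proof -
      obtain r where r: "r > 0" "ball (u v0) r \<subseteq> Ov" using Ov(1) u0Ov open_contains_ball by blast
      obtain d where "d > 0" "\<And>t. dist t 0 < d \<Longrightarrow> dist (\<gamma> t) (\<gamma> 0) < r"
        using gcont r(1) unfolding continuous_at_eps_delta by blast
      show ?thesis
      proof (rule that[of d])
        show "d > 0" by fact
        fix t :: real assume "dist t 0 < d"
        hence "dist (u v0) (\<gamma> t) < r" using \<open>\<And>t. dist t 0 < d \<Longrightarrow> dist (\<gamma> t) (\<gamma> 0) < r\<close> ge(2)
          by (simp add: dist_commute)
        thus "\<gamma> t \<in> Ov" using r(2) by auto
      qed
    qed
    obtain d5 where d5: "d5 > 0" "\<And>t. norm (t - 0) < d5 \<Longrightarrow> norm (\<gamma> t - \<gamma> 0 - (t - 0) *\<^sub>R wv) \<le> 1 * norm (t - 0)"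
    proof -
      have "\<forall>e>0. \<exists>d>0. \<forall>y. norm (y - 0) < d \<longrightarrow> norm (\<gamma> y - \<gamma> 0 - (y - 0) *\<^sub>R wv) \<le> e * norm (y - 0)"
        using gder unfolding has_derivative_at_alt by blast
      from this[rule_format, of 1] show ?thesis using that by auto
    qed
    define d where "d = Min {e, d3, d4, d5}"
    have d: "d > 0" "d \<le> e" "d \<le> d3" "d \<le> d4" "d \<le> d5" unfolding d_def using ge(1) d3 d4 d5 by auto
    show "\<exists>d>0. \<forall>y. norm (y - 0) < d \<longrightarrow> norm (f y - f 0 - 0) \<le> \<epsilon> * norm (y - 0)"
    proof (intro exI conjI allI impI)
      show "d > 0" by fact
      fix t :: real assume t: "norm (t - 0) < d"
      have gS: "\<gamma> t \<in> u ` U" using Ov ge(3)[of t] d4(2)[of t] t d by auto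
      define v where "v = g (\<gamma> t)"
      have uv: "u v = \<gamma> t" unfolding v_def using ug gS by blast
      have vv0: "norm (v - v0) < d1" using d2(2)[OF gS] d3(2)[of t] t d gu[OF v0] ge(2)
        by (auto simp: v_def dist_norm)
      have A: "norm (u v - u v0 - L (v - v0)) \<le> \<epsilon>1 * norm (v - v0)" using d1(2) vv0 by blast
      have B: "norm (\<gamma> t - u v0) \<le> (norm wv + 1) * \<bar>t\<bar>"
      proof -
        have "norm (\<gamma> t - \<gamma> 0 - t *\<^sub>R wv) \<le> \<bar>t\<bar>" using d5(2)[of t] t d by auto
        hence "norm (\<gamma> t - \<gamma> 0) \<le> \<bar>t\<bar> + norm (t *\<^sub>R wv)" using norm_triangle_ineq[of "\<gamma> t - \<gamma> 0 - t *\<^sub>R wv" "t *\<^sub>R wv"] by simp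
        thus ?thesis using ge(2) by (simp add: algebra_simps)
      qed
      have C: "m * norm (v - v0) \<le> norm (L (v - v0))" using m by blast
      have "norm (L (v - v0)) \<le> norm (u v - u v0) + norm (u v - u v0 - L (v - v0))"
        using norm_triangle_ineq4[of "u v - u v0" "u v - u v0 - L (v - v0)"] by simp
      hence "(m - \<epsilon>1) * norm (v - v0) \<le> norm (\<gamma> t - u v0)" using A C uv by (simp add: algebra_simps)
      hence "(m/2) * norm (v - v0) \<le> (norm wv + 1) * \<bar>t\<bar>" using B e1(2)
        proof -
        have "(m/2) * norm (v - v0) \<le> (m - \<epsilon>1) * norm (v - v0)"
          using e1(2) by (intro mult_right_mono) auto
        thus ?thesis using \<open>(m - \<epsilon>1) * norm (v - v0) \<le> norm (\<gamma> t - u v0)\<close> B by linarith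
      qed
      hence D: "norm (v - v0) \<le> (norm wv + 1) * \<bar>t\<bar> * 2 / m" using m by (simp add: field_simps)
      have "f t - f 0 = \<zeta> \<bullet> (u v - u v0 - L (v - v0))"
        unfolding f_def using uv ge(2) perp[of "v - v0"] L_def by (simp add: inner_diff_right inner_commute)
      hence "\<bar>f t - f 0\<bar> \<le> norm \<zeta> * (\<epsilon>1 * norm (v - v0))"
        proof -
        have "\<bar>\<zeta> \<bullet> (u v - u v0 - L (v - v0))\<bar> \<le> norm \<zeta> * norm (u v - u v0 - L (v - v0))"
          by (rule Cauchy_Schwarz_ineq2)
        also have "\<dots> \<le> norm \<zeta> * (\<epsilon>1 * norm (v - v0))" using A by (intro mult_left_mono) auto
        finally show ?thesis using \<open>f t - f 0 = _\<close> by simp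
      qed
      also have "\<dots> \<le> (norm \<zeta> + 1) * (\<epsilon>1 * ((norm wv + 1) * \<bar>t\<bar> * 2 / m))"
        using D e1(1) by (intro mult_mono) auto
      also have "\<dots> = \<epsilon>1 * K * \<bar>t\<bar>" unfolding K_def by (simp add: field_simps)
      also have "\<dots> \<le> \<epsilon> * \<bar>t\<bar>" using e1(3) by (simp add: mult_right_mono)
      finally show "norm (f t - f 0 - 0) \<le> \<epsilon> * norm (t - 0)" by simp
    qed
  qed
  have "(\<lambda>t. t * (\<zeta> \<bullet> wv)) = (\<lambda>t::real. 0::real)" using has_derivative_unique[OF fder1 fder2] .
  from fun_cong[OF this, of 1] show ?thesis by simp
qed

lemma sphere_chart_range:
  assumes ch: "surface_chart (sphere 0 1) W b" and w0: "w0 \<in> W"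
  shows "range (frechet_derivative b (at w0)) = {y. b w0 \<bullet> y = 0}"
proof -
  define Db where "Db = frechet_derivative b (at w0)"
  have "iter_pd [] b differentiable (at w0)" using ch w0 unfolding surface_chart_def smooth_on_def by blast
  hence bder: "(b has_derivative Db) (at w0)" unfolding Db_def by (simp add: frechet_derivative_works)
  have linD: "linear Db" using bder has_derivative_linear by blast
  have injD: "inj Db" using ch w0 unfolding surface_chart_def Db_def by blast
  have opW: "open W" using ch unfolding surface_chart_def by blast
  have sph: "\<And>w. w \<in> W \<Longrightarrow> b w \<bullet> b w = 1" using ch unfolding surface_chart_def
    by (auto simp: dot_square_norm)
  have d1: "((\<lambda>w. b w \<bullet> b w) has_derivative (\<lambda>h. b w0 \<bullet> Db h + Db h \<bullet> b w0)) (at w0)"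
    using bder by (auto intro!: derivative_eq_intros)
  have d2: "((\<lambda>w. b w \<bullet> b w) has_derivative (\<lambda>h. 0)) (at w0)"
    by (rule has_derivative_transform_within_open[OF has_derivative_const opW w0]) (simp add: sph)
  have perp: "\<And>h. b w0 \<bullet> Db h = 0"
    using fun_cong[OF has_derivative_unique[OF d1 d2]] by (simp add: inner_commute)
  have nz: "b w0 \<noteq> 0" using sph[OF w0] by auto
  have sub1: "subspace (range Db)" using linD subspace_UNIV by (rule linear_subspace_image)
  have sub2: "subspace {y. b w0 \<bullet> y = 0}" by (rule subspace_hyperplane)
  have incl: "range Db \<subseteq> {y. b w0 \<bullet> y = 0}" using perp by auto
  have "dim (range Db) = dim (UNIV :: (real^2) set)"
    using dim_image_eq[of Db UNIV] linD injD by (auto simp: inj_on_def)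
  hence dr: "dim (range Db) = 2" by simp
  have "dim {y. b w0 \<bullet> y = 0} = 2" using dim_hyperplane[OF nz] by simp
  hence "range Db = {y. b w0 \<bullet> y = 0}" using subspace_dim_equal[OF sub1 sub2 incl] dr by simp
  thus ?thesis unfolding Db_def .
qed

locale setting =
  fixes M S :: "(real^3) set" and \<epsilon> :: real and U W :: "(real^2) set" and u b :: "real^2 \<Rightarrow> real^3"
    and v0 w0 :: "real^2" and \<phi>0 lam0 :: real and z0 :: "real^3"
  assumes Mo: "open M" and chu: "surface_chart S U u" and chb: "surface_chart (sphere 0 1) W b"
    and tuy: "tuy_condition S M" and sep: "\<And>z x. z \<in> M \<Longrightarrow> x \<in> S \<Longrightarrow> z \<noteq> x"
    and v0: "v0 \<in> U" and w0: "w0 \<in> W" and ph0: "\<phi>0 \<in> {\<epsilon><..<pi/2-\<epsilon>}" and z0: "z0 \<in> M"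
    and phz: "phase (u v0) (b w0) \<phi>0 z0 = 0" and l0: "lam0 \<noteq> 0" and eps: "0 \<le> \<epsilon>"
begin

definition "p0 = (v0, w0, lam0, z0)"
definition "C = CI_coords M \<epsilon> U u W b"
definition "Du = frechet_derivative u (at v0)"
definition "Db = frechet_derivative b (at w0)"
definition "r0 = z0 - u v0"
definition "\<rho> = norm r0"
definition "\<beta> = b w0"
definition "c = cos \<phi>0"
definition "s = sin \<phi>0"
definition "\<kappa>0 = c / \<rho>"
definition "\<zeta>0 = - lam0 *\<^sub>R (\<beta> - \<kappa>0 *\<^sub>R r0)"

lemma Uo: "open U" using chu unfolding surface_chart_def by blast
lemma Wo: "open W" using chb unfolding surface_chart_def by blast
lemma uS: "x \<in> U \<Longrightarrow> u x \<in> S" using chu unfolding surface_chart_def by blast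
lemma bS: "x \<in> W \<Longrightarrow> norm (b x) = 1" using chb unfolding surface_chart_def by auto

lemma nb: "norm \<beta> = 1" unfolding \<beta>_def using bS[OF w0] .
lemma bb: "\<beta> \<bullet> \<beta> = 1" using nb by (simp add: dot_square_norm)
lemma r0nz: "r0 \<noteq> 0" unfolding r0_def using sep[OF z0 uS[OF v0]] by simp
lemma rho: "\<rho> > 0" unfolding \<rho>_def using r0nz by simp
lemma phi_rng: "0 < \<phi>0" "\<phi>0 < pi/2" using ph0 eps by auto
lemma cpos: "0 < c" "c < 1"
proof -
  show "0 < c" unfolding c_def using phi_rng by (intro cos_gt_zero_pi) auto
  have "cos \<phi>0 < cos 0" using phi_rng pi_gt3 by (intro cos_monotone_0_pi) auto
  thus "c < 1" unfolding c_def by simp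
qed
lemma spos: "0 < s" unfolding s_def using phi_rng by (auto intro!: sin_gt_zero)
lemma s_sqrt: "s = sqrt (1 - c\<^sup>2)" unfolding s_def c_def using spos
  by (metis c_def s_def less_eq_real_def real_sqrt_abs sin_squared_eq abs_of_pos)
lemma rb: "r0 \<bullet> \<beta> = \<rho> * c" using phz unfolding phase_def r0_def \<rho>_def \<beta>_def c_def by simp
lemma rr0: "rr u p0 = r0" unfolding rr_def p0_def r0_def by simp
lemma rat0: "rat u b p0 = c" unfolding rat_def rr0 using rb rho by (simp add: p0_def \<beta>_def \<rho>_def[symmetric])
lemma rr0': "rr u (v0, w0, lam0, z0) = r0" using rr0 by (simp add: p0_def)
lemma rat0': "rat u b (v0, w0, lam0, z0) = c" using rat0 by (simp add: p0_def)
lemma arccos0: "arccos c = \<phi>0" unfolding c_def using phi_rng by (intro arccos_cos) auto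
lemma Fmap0: "Fmap u b p0 = (((v0, w0, \<phi>0), (JT u v0 \<zeta>0, lam0 *\<^sub>R JT b w0 r0, lam0 * \<rho> * s)), (z0, \<zeta>0))"
  unfolding Fmap_def by (simp add: p0_def Fzeta_def rat0' rr0' arccos0 \<zeta>0_def \<kappa>0_def \<rho>_def \<beta>_def s_def)



lemma rat_bound:
  assumes "fst (snd q) \<in> W"
  shows "-1 \<le> rat u b q \<and> rat u b q \<le> 1"
proof (cases "rr u q = 0")
  case True thus ?thesis by (simp add: rat_def)
next
  case False
  have "\<bar>rr u q \<bullet> b (fst (snd q))\<bar> \<le> norm (rr u q)"
    using Cauchy_Schwarz_ineq2[of "rr u q" "b (fst (snd q))"] bS[OF assms] by simp
  thus ?thesis using False unfolding rat_def by (auto simp: abs_le_iff field_simps)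
qed

lemma Fmap_mem:
  assumes q: "fst q \<in> U" "fst (snd q) \<in> W" "fst (snd (snd q)) \<noteq> 0" "snd (snd (snd q)) \<in> M"
    "arccos (rat u b q) \<in> {\<epsilon><..<pi/2-\<epsilon>}"
  shows "Fmap u b q \<in> C"
proof -
  obtain v w l z where qq: "q = (v, w, l, z)" by (cases q) auto
  have rnz: "z - u v \<noteq> 0" using sep[of z "u v"] uS q by (simp add: qq)
  have cr: "cos (arccos (rat u b q)) = rat u b q" using rat_bound[OF q(2)] by simp
  have ph: "phase (u v) (b w) (arccos (rat u b q)) z = 0"
    unfolding phase_def cr using rnz by (simp add: rat_def rr_def qq)
  have ze: "Fzeta u b q = - l *\<^sub>R (b w - (cos (arccos (rat u b q)) / norm (z - u v)) *\<^sub>R (z - u v))"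
    unfolding cr by (simp add: Fzeta_def qq rr_def)
  show ?thesis unfolding C_def CI_coords_def Fmap_def mem_Collect_eq
    using q ph ze by (simp add: qq rr_def) blast
qed


lemma uder: "(u has_derivative Du) (at v0)"
proof -
  have "iter_pd [] u differentiable (at v0)" using chu v0 unfolding surface_chart_def smooth_on_def by blast
  thus ?thesis unfolding Du_def by (simp add: frechet_derivative_works)
qed
lemma bder: "(b has_derivative Db) (at w0)"
proof -
  have "iter_pd [] b differentiable (at w0)" using chb w0 unfolding surface_chart_def smooth_on_def by blast
  thus ?thesis unfolding Db_def by (simp add: frechet_derivative_works)
qed
lemma fdu: "((\<lambda>v. fd u v i) has_derivative frechet_derivative (\<lambda>v. fd u v i) (at v0)) (at v0)"
proof -
  have "iter_pd [i] u differentiable (at v0)" using chu v0 unfolding surface_chart_def smooth_on_def by blast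
  thus ?thesis by (simp add: frechet_derivative_works fd_def)
qed
lemma fdb: "((\<lambda>v. fd b v i) has_derivative frechet_derivative (\<lambda>v. fd b v i) (at w0)) (at w0)"
proof -
  have "iter_pd [i] b differentiable (at w0)" using chb w0 unfolding surface_chart_def smooth_on_def by blast
  thus ?thesis by (simp add: frechet_derivative_works fd_def)
qed

definition "F' = frechet_derivative (Fmap u b) (at p0)"
lemma FD: "(Fmap u b has_derivative F') (at p0)"
proof -
  have "\<exists>D. (Fmap u b has_derivative D) (at p0)"
    by (rule Fmap_diff[of u Du p0 b Db "\<lambda>i. frechet_derivative (\<lambda>v. fd u v i) (at v0)"
          "\<lambda>i. frechet_derivative (\<lambda>v. fd b v i) (at w0)"])
       (use uder bder fdu fdb rr0 r0nz rat0 cpos in \<open>auto simp: p0_def\<close>)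
  thus ?thesis unfolding F'_def using frechet_derivative_works differentiable_def by blast
qed
lemma linF: "linear F'" using FD has_derivative_linear by blast

definition "Drr (h::par) = snd (snd (snd h)) - Du (fst h)"
definition "D\<rho> h = (r0 \<bullet> Drr h) / \<rho>"
definition "Drat h = (Drr h \<bullet> \<beta> + r0 \<bullet> Db (fst (snd h)) - c * D\<rho> h) / \<rho>"
definition "D\<kappa> h = (Drat h - \<kappa>0 * D\<rho> h) / \<rho>"
definition "D\<zeta> h = - fst (snd (snd h)) *\<^sub>R (\<beta> - \<kappa>0 *\<^sub>R r0) - lam0 *\<^sub>R (Db (fst (snd h)) - (D\<kappa> h *\<^sub>R r0 + \<kappa>0 *\<^sub>R Drr h))"
definition "D\<phi> h = - Drat h / s"

lemma uq[derivative_intros]: "((\<lambda>q. u (fst q)) has_derivative (\<lambda>h. Du (fst h))) (at p0 within X)"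
  using uder by (intro chain_fst) (simp add: p0_def)
lemma bq[derivative_intros]: "((\<lambda>q. b (fst (snd q))) has_derivative (\<lambda>h. Db (fst (snd h)))) (at p0 within X)"
  using bder by (intro chain_fst_snd) (simp add: p0_def)

lemma rr_der: "(rr u has_derivative Drr) (at p0)"
  unfolding rr_def[abs_def] Drr_def[abs_def] by (auto intro!: derivative_eq_intros)

lemma rho_der: "((\<lambda>q. norm (rr u q)) has_derivative D\<rho>) (at p0)"
  using has_derivative_norm_chain[OF rr_der] r0nz unfolding rr0
  by (simp add: D\<rho>_def[abs_def] sgn_div_norm \<rho>_def[symmetric] inner_commute divide_inverse mult.commute)

lemma rat_der: "(rat u b has_derivative Drat) (at p0)"
  unfolding rat_def[abs_def]
  apply (rule derivative_eq_intros rr_der rho_der bq | simp add: rr0 r0nz)+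
  apply (rule ext)
  using rho apply (simp add: Drat_def rr0 \<rho>_def[symmetric] \<beta>_def[symmetric] p0_def rb sgn_div_norm D\<rho>_def inner_commute)
  using rb apply (simp add: field_simps inner_commute)
  done


lemma zeta_der: "(Fzeta u b has_derivative D\<zeta>) (at p0)"
  unfolding Fzeta_def[abs_def]
  apply (rule derivative_eq_intros rr_der rho_der bq rat_der | simp add: rr0 r0nz)+
  apply (rule ext)
  using rho apply (simp add: D\<zeta>_def D\<kappa>_def rr0 rat0 rat0' \<rho>_def[symmetric] \<beta>_def[symmetric] p0_def \<kappa>0_def sgn_div_norm D\<rho>_def inner_commute)
  apply (simp add: field_simps)
  done

lemma phi_der: "((\<lambda>q. arccos (rat u b q)) has_derivative D\<phi>) (at p0)"
  apply (rule derivative_eq_intros)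
  using cpos apply (simp add: rat0)
  using cpos apply (simp add: rat0)
  apply (rule rat_der)
  apply (rule ext)
  apply (simp add: D\<phi>_def rat0 s_sqrt[symmetric] divide_inverse)
  done


definition "D\<phi>h h = fst (snd (snd h)) * \<rho> * s + lam0 * D\<rho> h * s + lam0 * \<rho> * (c * D\<phi> h)"

lemma comp_v: "fst (fst (fst (F' h))) = fst h"
proof -
  have "((\<lambda>q. fst (fst (fst (Fmap u b q)))) has_derivative (\<lambda>h. fst (fst (fst (F' h))))) (at p0)"
    using FD by (intro derivative_intros)
  moreover have "((\<lambda>q. fst (fst (fst (Fmap u b q)))) has_derivative (\<lambda>h. fst h)) (at p0)"
    unfolding Fmap_def by (auto intro!: derivative_intros)
  ultimately show ?thesis using has_derivative_unique by metis
qed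
lemma comp_w: "fst (snd (fst (fst (F' h)))) = fst (snd h)"
proof -
  have "((\<lambda>q. fst (snd (fst (fst (Fmap u b q))))) has_derivative (\<lambda>h. fst (snd (fst (fst (F' h)))))) (at p0)"
    using FD by (intro derivative_intros)
  moreover have "((\<lambda>q. fst (snd (fst (fst (Fmap u b q))))) has_derivative (\<lambda>h. fst (snd h))) (at p0)"
    unfolding Fmap_def by (auto intro!: derivative_intros)
  ultimately show ?thesis using has_derivative_unique by metis
qed
lemma comp_phi: "snd (snd (fst (fst (F' h)))) = D\<phi> h"
proof -
  have "((\<lambda>q. snd (snd (fst (fst (Fmap u b q))))) has_derivative (\<lambda>h. snd (snd (fst (fst (F' h)))))) (at p0)"
    using FD by (intro derivative_intros)
  moreover have "((\<lambda>q. snd (snd (fst (fst (Fmap u b q))))) has_derivative D\<phi>) (at p0)"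
    unfolding Fmap_def using phi_der by simp
  ultimately show ?thesis using has_derivative_unique by metis
qed
lemma comp_z: "fst (snd (F' h)) = snd (snd (snd h))"
proof -
  have "((\<lambda>q. fst (snd (Fmap u b q))) has_derivative (\<lambda>h. fst (snd (F' h)))) (at p0)"
    using FD by (intro derivative_intros)
  moreover have "((\<lambda>q. fst (snd (Fmap u b q))) has_derivative (\<lambda>h. snd (snd (snd h)))) (at p0)"
    unfolding Fmap_def by (auto intro!: derivative_intros)
  ultimately show ?thesis using has_derivative_unique by metis
qed
lemma comp_zeta: "snd (snd (F' h)) = D\<zeta> h"
proof -
  have "((\<lambda>q. snd (snd (Fmap u b q))) has_derivative (\<lambda>h. snd (snd (F' h)))) (at p0)"
    using FD by (intro derivative_intros)
  moreover have "((\<lambda>q. snd (snd (Fmap u b q))) has_derivative D\<zeta>) (at p0)"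
    unfolding Fmap_def using zeta_der by simp
  ultimately show ?thesis using has_derivative_unique by metis
qed
lemma comp_phih: "snd (snd (snd (fst (F' h)))) = D\<phi>h h"
proof -
  have "((\<lambda>q. snd (snd (snd (fst (Fmap u b q))))) has_derivative (\<lambda>h. snd (snd (snd (fst (F' h)))))) (at p0)"
    using FD by (intro derivative_intros)
  moreover have "((\<lambda>q. snd (snd (snd (fst (Fmap u b q))))) has_derivative D\<phi>h) (at p0)"
  proof -
    have A: "((\<lambda>q. fst (snd (snd q)) * norm (rr u q)) has_derivative (\<lambda>h. fst (snd (snd p0)) * D\<rho> h + fst (snd (snd h)) * norm (rr u p0))) (at p0)"
      by (rule has_derivative_mult[OF has_derivative_fst[OF has_derivative_snd[OF has_derivative_snd[OF has_derivative_ident]]] rho_der])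
    have B: "((\<lambda>q. sin (arccos (rat u b q))) has_derivative (\<lambda>h. cos (arccos (rat u b p0)) * D\<phi> h)) (at p0)"
      using has_derivative_sin[OF phi_der] by (simp add: mult.commute)
    show ?thesis
      unfolding Fmap_def snd_conv fst_conv
      by (rule has_derivative_eq_rhs[OF has_derivative_mult[OF A B]])
         (auto simp: D\<phi>h_def rr0' rat0' arccos0 \<rho>_def[symmetric] p0_def algebra_simps fun_eq_iff, simp add: s_def c_def)
  qed
  ultimately show ?thesis using has_derivative_unique by metis
qed


lemma comp_uh: assumes "fst h = 0" shows "fst (snd (fst (F' h))) = JT u v0 (D\<zeta> h)"
proof -
  define D1 where "D1 i = frechet_derivative (\<lambda>v. fd u v i) (at v0)" for i
  have fq: "((\<lambda>q. fd u (fst q) i) has_derivative (\<lambda>h. D1 i (fst h))) (at p0)" for i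
    unfolding D1_def using fdu by (intro chain_fst) (simp add: p0_def)
  have lin: "linear (D1 i)" for i using fdu has_derivative_linear unfolding D1_def by blast
  define G where "G h = (D1 1 (fst h) \<bullet> Fzeta u b p0 + fd u v0 1 \<bullet> D\<zeta> h) *\<^sub>R axis (1::2) (1::real)
     + (D1 2 (fst h) \<bullet> Fzeta u b p0 + fd u v0 2 \<bullet> D\<zeta> h) *\<^sub>R axis (2::2) 1" for h
  have "((\<lambda>q. fst (snd (fst (Fmap u b q)))) has_derivative (\<lambda>h. fst (snd (fst (F' h))))) (at p0)"
    using FD by (intro derivative_intros)
  moreover have "((\<lambda>q. fst (snd (fst (Fmap u b q)))) has_derivative G) (at p0)"
    unfolding Fmap_def fst_conv snd_conv JT_eq G_def
    by (rule derivative_eq_intros fq zeta_der refl | simp add: p0_def)+ (simp add: fun_eq_iff add.commute)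
  ultimately have "fst (snd (fst (F' h))) = G h" using has_derivative_unique by metis
  also have "\<dots> = JT u v0 (D\<zeta> h)" unfolding G_def JT_eq assms using lin by (simp add: linear_0)
  finally show ?thesis .
qed

lemma comp_bh: assumes "fst (snd h) = 0"
  shows "fst (snd (snd (fst (F' h)))) = fst (snd (snd h)) *\<^sub>R JT b w0 r0 + lam0 *\<^sub>R JT b w0 (Drr h)"
proof -
  define D1 where "D1 i = frechet_derivative (\<lambda>v. fd b v i) (at w0)" for i
  have fq: "((\<lambda>q. fd b (fst (snd q)) i) has_derivative (\<lambda>h. D1 i (fst (snd h)))) (at p0)" for i
    unfolding D1_def using fdb by (intro chain_fst_snd) (simp add: p0_def)
  have lin: "linear (D1 i)" for i using fdb has_derivative_linear unfolding D1_def by blast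
  define G where "G h = fst (snd (snd h)) *\<^sub>R JT b w0 r0 + lam0 *\<^sub>R
     ((D1 1 (fst (snd h)) \<bullet> r0 + fd b w0 1 \<bullet> Drr h) *\<^sub>R axis (1::2) (1::real)
     + (D1 2 (fst (snd h)) \<bullet> r0 + fd b w0 2 \<bullet> Drr h) *\<^sub>R axis (2::2) 1)" for h
  have "((\<lambda>q. fst (snd (snd (fst (Fmap u b q))))) has_derivative (\<lambda>h. fst (snd (snd (fst (F' h)))))) (at p0)"
    using FD by (intro derivative_intros)
  moreover have "((\<lambda>q. fst (snd (snd (fst (Fmap u b q))))) has_derivative G) (at p0)"
    unfolding Fmap_def fst_conv snd_conv
    apply (subst JT_eq)
    apply (rule derivative_eq_intros fq rr_der refl | simp add: p0_def)+
    apply (simp add: G_def rr0' JT_eq fun_eq_iff algebra_simps)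
    done
  ultimately have "fst (snd (snd (fst (F' h)))) = G h" using has_derivative_unique by metis
  also have "\<dots> = fst (snd (snd h)) *\<^sub>R JT b w0 r0 + lam0 *\<^sub>R JT b w0 (Drr h)"
    unfolding G_def assms using lin by (simp add: linear_0 JT_eq)
  finally show ?thesis .
qed


lemma nbhd: "\<exists>d>0. \<forall>q. dist q p0 < d \<longrightarrow> Fmap u b q \<in> C"
proof -
  obtain d1 where d1: "d1 > 0" "\<forall>q. dist q p0 < d1 \<longrightarrow> fst q \<in> U"
    using cont_ball[where f=fst and x=p0 and Opn=U] Uo v0 by (auto simp: p0_def)
  obtain d2 where d2: "d2 > 0" "\<forall>q. dist q p0 < d2 \<longrightarrow> fst (snd q) \<in> W"
    using cont_ball[where f="\<lambda>q. fst (snd q)" and x=p0 and Opn=W] Wo w0 by (auto simp: p0_def)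
  have "\<exists>d>0. \<forall>q. dist q p0 < d \<longrightarrow> fst (snd (snd q)) \<in> - {0}"
    by (rule cont_ball) (auto simp: p0_def l0)
  then obtain d3 where d3: "d3 > 0" "\<forall>q. dist q p0 < d3 \<longrightarrow> fst (snd (snd q)) \<in> - {0}" by blast
  obtain d4 where d4: "d4 > 0" "\<forall>q. dist q p0 < d4 \<longrightarrow> snd (snd (snd q)) \<in> M"
    using cont_ball[where f="\<lambda>q. snd (snd (snd q))" and x=p0 and Opn=M] Mo z0 by (auto simp: p0_def)
  have ic: "isCont (\<lambda>q. arccos (rat u b q)) p0" using phi_der has_derivative_continuous by blast
  obtain d5 where d5: "d5 > 0" "\<forall>q. dist q p0 < d5 \<longrightarrow> arccos (rat u b q) \<in> {\<epsilon><..<pi/2-\<epsilon>}"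
    using cont_ball[OF ic, where Opn="{\<epsilon><..<pi/2-\<epsilon>}"] rat0 arccos0 ph0 by auto
  define d where "d = Min {d1, d2, d3, d4, d5}"
  have "d > 0" unfolding d_def using d1 d2 d3 d4 d5 by auto
  moreover have "\<forall>q. dist q p0 < d \<longrightarrow> Fmap u b q \<in> C"
  proof (intro allI impI)
    fix q assume "dist q p0 < d"
    hence dd: "dist q p0 < d1" "dist q p0 < d2" "dist q p0 < d3" "dist q p0 < d4" "dist q p0 < d5"
      unfolding d_def by auto
    show "Fmap u b q \<in> C"
      apply (rule Fmap_mem)
      using d1(2) dd(1) apply blast
      using d2(2) dd(2) apply blast
      using d3(2) dd(3) apply blast
      using d4(2) dd(4) apply blast
      using d5(2) dd(5) apply blast
      done
  qed
  ultimately show ?thesis by blast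
qed

definition "T = tangent_vectors C (Fmap u b p0)"

lemma range_sub: "F' x \<in> T"
proof -
  obtain d where d: "d > 0" "\<forall>q. dist q p0 < d \<longrightarrow> Fmap u b q \<in> C" using nbhd by blast
  define \<gamma> where "\<gamma> t = Fmap u b (p0 + t *\<^sub>R x)" for t
  have lin: "((\<lambda>t. p0 + t *\<^sub>R x) has_derivative (\<lambda>t. t *\<^sub>R x)) (at 0)"
    by (auto intro!: derivative_eq_intros)
  have "(\<gamma> has_derivative (\<lambda>t. F' (t *\<^sub>R x))) (at 0)"
    unfolding \<gamma>_def using has_derivative_compose[OF lin, of "Fmap u b" F'] FD by (simp add: o_def)
  hence der: "(\<gamma> has_vector_derivative F' x) (at 0)"
    unfolding has_vector_derivative_def using linF by (simp add: linear_scale)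
  define e where "e = d / (norm x + 1)"
  have e: "e > 0" unfolding e_def using d(1) by (simp add: add_nonneg_pos)
  have mem: "\<gamma> t \<in> C" if "\<bar>t\<bar> < e" for t
  proof -
    have "\<bar>t\<bar> * norm x \<le> \<bar>t\<bar> * (norm x + 1)" by (simp add: mult_left_mono)
    also have "\<dots> < e * (norm x + 1)" using that by (intro mult_strict_right_mono) (auto simp: add_nonneg_pos)
    also have "\<dots> = d" unfolding e_def using norm_ge_zero[of x]
      by (metis add_nonneg_pos nonzero_divide_eq_eq order_less_irrefl zero_less_one)
    finally have "dist (p0 + t *\<^sub>R x) p0 < d" by (simp add: dist_norm)
    thus ?thesis using d(2) unfolding \<gamma>_def by blast
  qed
  show ?thesis unfolding T_def tangent_vectors_def mem_Collect_eq
    by (intro exI[of _ \<gamma>] exI[of _ e]) (use e mem der in \<open>auto simp: \<gamma>_def\<close>)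
qed


definition "cmap P = (fst (fst (fst P)), fst (snd (fst (fst P))),
   snd (snd (snd (fst P))) / (norm (fst (snd P) - u (fst (fst (fst P)))) * sin (snd (snd (fst (fst P))))),
   fst (snd P))"

lemma mem_C_eq: assumes "P \<in> C" shows "P = Fmap u b (cmap P)"
proof -
  obtain v w \<phi> uh bh \<phi>h z \<zeta> lam where P: "P = (((v, w, \<phi>), (uh, bh, \<phi>h)), (z, \<zeta>))"
    and c: "v \<in> U" "w \<in> W" "\<phi> \<in> {\<epsilon> <..< pi/2 - \<epsilon>}" "z \<in> M"
       "phase (u v) (b w) \<phi> z = 0" "lam \<noteq> 0"
       "\<zeta> = - lam *\<^sub>R (b w - (cos \<phi> / norm (z - u v)) *\<^sub>R (z - u v))"
       "uh = JT u v \<zeta>" "bh = lam *\<^sub>R JT b w (z - u v)" "\<phi>h = lam * norm (z - u v) * sin \<phi>"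
    using assms unfolding C_def CI_coords_def by blast
  have rnz: "norm (z - u v) \<noteq> 0" using sep[OF c(4) uS[OF c(1)]] by simp
  have sp: "sin \<phi> > 0" using c(3) eps by (intro sin_gt_zero) auto
  have cp: "0 \<le> \<phi>" "\<phi> \<le> pi" using c(3) eps by auto
  have lam: "\<phi>h / (norm (z - u v) * sin \<phi>) = lam" using c(10) rnz sp by (simp add: field_simps)
  have rat: "rat u b (v, w, lam, z) = cos \<phi>"
    using c(5) rnz unfolding rat_def rr_def phase_def by (simp add: field_simps)
  have ac: "arccos (cos \<phi>) = \<phi>" using cp by (rule arccos_cos)
  show ?thesis unfolding P cmap_def Fmap_def using c lam
    by (simp add: rat ac Fzeta_def rr_def)
qed


lemma u_chain: "(g has_derivative g') (at x within X) \<Longrightarrow> g x = v0 \<Longrightarrow>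
   ((\<lambda>y. u (g y)) has_derivative (\<lambda>h. Du (g' h))) (at x within X)"
  using has_derivative_compose[of g g' x X u Du] uder by (simp add: o_def)

lemma cmap0: "cmap (Fmap u b p0) = p0"
  unfolding Fmap0 cmap_def using rho spos l0 by (simp add: p0_def r0_def[symmetric] \<rho>_def[symmetric] s_def[symmetric])

lemma cmap_der: "\<exists>D. (cmap has_derivative D) (at (Fmap u b p0))"
proof -
  have n0: "fst (snd (Fmap u b p0)) - u (fst (fst (fst (Fmap u b p0)))) \<noteq> 0" using r0nz by (simp add: Fmap0 r0_def)
  have d0: "norm (fst (snd (Fmap u b p0)) - u (fst (fst (fst (Fmap u b p0))))) * sin (snd (snd (fst (fst (Fmap u b p0))))) \<noteq> 0"
    using r0nz spos by (simp add: Fmap0 r0_def s_def)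
  have v: "fst (fst (fst (Fmap u b p0))) = v0" by (simp add: Fmap0)
  show ?thesis unfolding cmap_def[abs_def]
    by (intro exI) (rule derivative_intros u_chain v n0 d0 | simp)+
qed

lemma T_sub: assumes "wv \<in> T" shows "\<exists>x. wv = F' x"
proof -
  obtain \<gamma> e where ge: "e > 0" "\<gamma> 0 = Fmap u b p0" "\<And>t. \<bar>t\<bar> < e \<Longrightarrow> \<gamma> t \<in> C"
      "(\<gamma> has_vector_derivative wv) (at 0)"
    using assms unfolding T_def tangent_vectors_def by blast
  obtain Dc where Dc: "(cmap has_derivative Dc) (at (Fmap u b p0))" using cmap_der by blast
  have gd: "(\<gamma> has_derivative (\<lambda>t. t *\<^sub>R wv)) (at 0)" using ge(4) by (simp add: has_vector_derivative_def)
  have c1: "((\<lambda>t. cmap (\<gamma> t)) has_derivative (\<lambda>t. Dc (t *\<^sub>R wv))) (at 0)"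
    using has_derivative_compose[OF gd, of cmap Dc] Dc ge(2) by (simp add: o_def)
  have c2: "((\<lambda>t. Fmap u b (cmap (\<gamma> t))) has_derivative (\<lambda>t. F' (Dc (t *\<^sub>R wv)))) (at 0)"
    using has_derivative_compose[OF c1, of "Fmap u b" F'] FD ge(2) cmap0 by (simp add: o_def)
  have c3: "((\<lambda>t. Fmap u b (cmap (\<gamma> t))) has_derivative (\<lambda>t. t *\<^sub>R wv)) (at 0)"
  proof (rule has_derivative_transform_within_open[OF gd, of "ball 0 e"])
    show "open (ball (0::real) e)" by simp
    show "(0::real) \<in> ball 0 e" using ge(1) by simp
    fix t :: real assume "t \<in> ball 0 e"
    hence "\<bar>t\<bar> < e" by (simp add: dist_norm)
    thus "\<gamma> t = Fmap u b (cmap (\<gamma> t))" using mem_C_eq ge(3) by blast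
  qed
  have "(\<lambda>t. F' (Dc (t *\<^sub>R wv))) = (\<lambda>t. t *\<^sub>R wv)" using has_derivative_unique[OF c2 c3] .
  from fun_cong[OF this, of 1] have "F' (Dc wv) = wv" by simp
  thus ?thesis by metis
qed

lemma T_eq: "T = range F'" using T_sub range_sub by blast


lemma lin2: "linear L \<Longrightarrow> L h = (h$1) *\<^sub>R L (axis 1 1) + (h$2) *\<^sub>R L (axis (2::2) 1)"
proof -
  assume l: "linear L"
  have "h = (h$1) *\<^sub>R axis 1 1 + (h$2) *\<^sub>R axis (2::2) (1::real)"
    by (auto simp: vec_eq_iff forall_2 axis_def)
  hence "L h = L ((h$1) *\<^sub>R axis 1 1 + (h$2) *\<^sub>R axis (2::2) (1::real))" by simp
  also have "\<dots> = (h$1) *\<^sub>R L (axis 1 1) + (h$2) *\<^sub>R L (axis (2::2) 1)"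
    using l by (simp add: linear_add linear_scale)
  finally show ?thesis .
qed

lemma linDu: "linear Du" using uder has_derivative_linear by blast
lemma linDb: "linear Db" using bder has_derivative_linear by blast
lemma Du0[simp]: "Du 0 = 0" using linDu linear_0 by blast
lemma Db0[simp]: "Db 0 = 0" using linDb linear_0 by blast

lemma JT_zero_u: assumes "JT u v0 y = 0" shows "Du h \<bullet> y = 0"
proof -
  have "fd u v0 1 \<bullet> y = 0" "fd u v0 2 \<bullet> y = 0"
    using assms unfolding JT_def fd_def by (auto simp: vec_eq_iff)
  thus ?thesis using lin2[OF linDu, of h] by (simp add: fd_def Du_def inner_add_left)
qed
lemma JT_zero_b: assumes "JT b w0 y = 0" shows "Db h \<bullet> y = 0"
proof -
  have "fd b w0 1 \<bullet> y = 0" "fd b w0 2 \<bullet> y = 0"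
    using assms unfolding JT_def fd_def by (auto simp: vec_eq_iff)
  thus ?thesis using lin2[OF linDb, of h] by (simp add: fd_def Db_def inner_add_left)
qed
lemma JT_lin: "JT f v (a *\<^sub>R x + b' *\<^sub>R y) = a *\<^sub>R JT f v x + b' *\<^sub>R JT f v y"
  unfolding JT_eq by (simp add: inner_add_right algebra_simps)
lemma JT_scale: "JT f v (a *\<^sub>R x) = a *\<^sub>R JT f v x"
  unfolding JT_eq by (simp add: algebra_simps)

definition "e2 = \<beta> - \<kappa>0 *\<^sub>R r0"
lemma rr_self: "r0 \<bullet> r0 = \<rho>\<^sup>2" unfolding \<rho>_def by (simp add: dot_square_norm)
lemma r0e2: "r0 \<bullet> e2 = 0" unfolding e2_def \<kappa>0_def using rb rr_self rho
  by (simp add: inner_diff_right power2_eq_square)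
lemma be2: "\<beta> \<bullet> e2 = 1 - c\<^sup>2" unfolding e2_def \<kappa>0_def using rb rho bb
  by (simp add: inner_diff_right inner_commute power2_eq_square)
lemma e2nz: "e2 \<noteq> 0"
proof
  assume "e2 = 0"
  hence "c * c = 1" using be2 by (simp add: power2_eq_square)
  moreover have "c * c < 1 * 1" using cpos by (intro mult_strict_mono) auto
  ultimately show False by simp
qed
lemma zeta0_e2: "\<zeta>0 = - lam0 *\<^sub>R e2" unfolding \<zeta>0_def e2_def by simp

lemma K: "JT u v0 \<zeta>0 \<noteq> 0"
proof
  assume J: "JT u v0 \<zeta>0 = 0"
  have perp: "\<And>h. frechet_derivative u (at v0) h \<bullet> \<zeta>0 = 0" using JT_zero_u[OF J] by (simp add: Du_def)
  have znz: "\<zeta>0 \<noteq> 0" using zeta0_e2 e2nz l0 by simp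
  have acc: "accessible S z0 \<zeta>0" using tuy z0 znz unfolding tuy_condition_def by blast
  have H: "u v0 \<in> hyperplane_H z0 \<zeta>0 \<inter> S"
    using uS[OF v0] r0e2 unfolding hyperplane_H_def zeta0_e2 r0_def
    by (simp add: inner_diff_left inner_commute)
  have "\<not> (\<forall>t \<in> tangent_vectors S (u v0). \<zeta>0 \<bullet> t = 0)" using acc H unfolding accessible_def by blast
  thus False using tangency[OF chu v0 perp] by blast
qed


lemma Db_range: "range Db = {y. \<beta> \<bullet> y = 0}"
  unfolding Db_def \<beta>_def using sphere_chart_range[OF chb w0] .

lemma kernel: assumes "fst (F' h) = 0" shows "h = 0"
proof -
  obtain dv dw dl dz where h: "h = (dv, dw, dl, dz)" by (cases h) auto
  have "fst (fst (fst (F' h))) = 0" "fst (snd (fst (fst (F' h)))) = 0" "snd (snd (fst (fst (F' h)))) = 0"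
       "fst (snd (fst (F' h))) = 0" "fst (snd (snd (fst (F' h)))) = 0" "snd (snd (snd (fst (F' h)))) = 0"
    using assms by (simp_all add: prod_eq_iff)
  hence dv: "dv = 0" and dw: "dw = 0" and phi: "D\<phi> h = 0" and uh: "JT u v0 (D\<zeta> h) = 0"
    and bh: "dl *\<^sub>R JT b w0 r0 + lam0 *\<^sub>R JT b w0 (Drr h) = 0" and phih: "D\<phi>h h = 0"
    using comp_v comp_w comp_phi comp_uh comp_bh comp_phih by (auto simp: h)
  have Drr: "Drr h = dz" unfolding Drr_def h dv by simp
  have Drho: "D\<rho> h = (r0 \<bullet> dz) / \<rho>" unfolding D\<rho>_def Drr ..
  have Drat0: "Drat h = 0" using phi spos unfolding D\<phi>_def by simp
  hence "Drr h \<bullet> \<beta> + r0 \<bullet> Db (fst (snd h)) - c * D\<rho> h = 0" unfolding Drat_def using rho by simp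
  hence zb: "dz \<bullet> \<beta> = c * D\<rho> h" unfolding Drr by (simp add: h dw)
  have "dl * \<rho> * s + lam0 * D\<rho> h * s = 0" using phih phi unfolding D\<phi>h_def h by simp
  hence "s * (dl * \<rho> + lam0 * D\<rho> h) = 0" by (simp add: algebra_simps)
  hence lr: "dl * \<rho> + lam0 * D\<rho> h = 0" using spos by simp
  define y where "y = dl *\<^sub>R r0 + lam0 *\<^sub>R dz"
  have Jy: "JT b w0 y = 0" unfolding y_def JT_lin using bh Drr by simp
  have "\<beta> \<bullet> y = c * (dl * \<rho> + lam0 * D\<rho> h)"
    unfolding y_def using rb zb by (simp add: inner_add_right inner_commute algebra_simps)
  hence "\<beta> \<bullet> y = 0" using lr by simp
  then obtain k where k: "y = Db k" using Db_range by blast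
  have "y \<bullet> y = 0" using JT_zero_b[OF Jy, of k] k by simp
  hence y0: "y = 0" by simp
  hence "lam0 *\<^sub>R dz = - (dl *\<^sub>R r0)" unfolding y_def by (simp add: add_eq_0_iff2 add.commute)
  hence "(1 / lam0) *\<^sub>R (lam0 *\<^sub>R dz) = (1/lam0) *\<^sub>R (- (dl *\<^sub>R r0))" by simp
  hence dz: "dz = (- dl / lam0) *\<^sub>R r0" using l0 by simp
  have Drho2: "D\<rho> h = (- dl / lam0) * \<rho>" unfolding Drho dz using rho rr_self
    by (simp add: power2_eq_square)
  have Dk: "D\<kappa> h = \<kappa>0 * dl / lam0" unfolding D\<kappa>_def Drat0 Drho2 using rho l0 by (simp add: field_simps)
  have "D\<zeta> h = - dl *\<^sub>R e2 + (lam0 * D\<kappa> h) *\<^sub>R r0 + (lam0 * \<kappa>0) *\<^sub>R dz"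
    unfolding D\<zeta>_def e2_def Drr by (simp add: h dw algebra_simps)
  also have "\<dots> = - dl *\<^sub>R e2" unfolding Dk dz using l0 by (simp add: field_simps)
  finally have Dz: "D\<zeta> h = (dl / lam0) *\<^sub>R \<zeta>0" unfolding zeta0_e2 using l0 by simp
  have "(dl / lam0) *\<^sub>R JT u v0 \<zeta>0 = 0" using uh unfolding Dz JT_scale .
  hence dl: "dl = 0" using K l0 by simp
  show ?thesis using h dv dw dl dz by (simp add: zero_prod_def)
qed

lemma inj_fstF: "inj (\<lambda>h. fst (F' h))"
proof -
  have lin: "linear (\<lambda>h. fst (F' h))" using linF by (intro linear_compose[OF linF linear_fst, unfolded o_def])
  show ?thesis using kernel lin by (simp add: linear_injective_0)
qed


lemma linDz: "linear D\<zeta>" by (rule has_derivative_linear[OF zeta_der])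
lemma Dphi_lin: "D\<phi> (x + k *\<^sub>R y) = D\<phi> x + k * D\<phi> y"
  using comp_phi[of "x + k *\<^sub>R y"] comp_phi[of x] comp_phi[of y] linear_add[OF linF] linear_scale[OF linF] by simp
lemma Dz_lin: "D\<zeta> (x + y) = D\<zeta> x + D\<zeta> y"
  using linear_add[OF linDz] .

lemma dim_fst: "dim (fst ` T) = 8"
proof -
  have lin: "linear (\<lambda>h. fst (F' h))" using linF by (intro linear_compose[OF linF linear_fst, unfolded o_def])
  have "fst ` T = range (\<lambda>h. fst (F' h))" unfolding T_eq by auto
  also have "dim \<dots> = dim (UNIV :: par set)"
    using dim_image_eq[OF lin, of UNIV] inj_fstF by (simp add: inj_on_def inj_def)
  finally show ?thesis by simp
qed

lemma z_surj: "(\<lambda>q. fst (snd q)) ` T = UNIV"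
proof -
  have "a \<in> (\<lambda>q. fst (snd q)) ` T" for a
    using comp_z[of "(0,0,0,a)"] unfolding T_eq by (auto intro!: image_eqI[where x="F' (0,0,0,a)"])
  thus ?thesis by auto
qed

lemma base_surj: "(\<lambda>q. fst (fst q)) ` T = UNIV"
proof -
  define x2 :: par where "x2 = (0, 0, 0, e2)"
  have Drr2: "Drr x2 = e2" unfolding Drr_def x2_def by simp
  have Drho2: "D\<rho> x2 = 0" unfolding D\<rho>_def Drr2 r0e2 by simp
  have "Drat x2 = (1 - c\<^sup>2) / \<rho>" unfolding Drat_def Drr2 Drho2 using be2
    by (simp add: x2_def inner_commute)
  hence Dp2: "D\<phi> x2 = - ((1 - c\<^sup>2) / \<rho>) / s" unfolding D\<phi>_def by simp
  have "c * c < 1 * 1" using cpos by (intro mult_strict_mono) auto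
  hence "c\<^sup>2 < 1" by (simp add: power2_eq_square)
  hence Dp2nz: "D\<phi> x2 \<noteq> 0" unfolding Dp2 using rho spos by simp
  have "t \<in> (\<lambda>q. fst (fst q)) ` T" for t :: "(real^2) \<times> (real^2) \<times> real"
  proof -
    obtain a1 a2 a3 where t: "t = (a1, a2, a3)" by (cases t) auto
    define x1 :: par where "x1 = (a1, a2, 0, 0)"
    define k where "k = (a3 - D\<phi> x1) / D\<phi> x2"
    define x where "x = x1 + k *\<^sub>R x2"
    have "fst (fst (F' x)) = t"
    proof -
      have "fst (fst (fst (F' x))) = a1" using comp_v[of x] by (simp add: x_def x1_def x2_def)
      moreover have "fst (snd (fst (fst (F' x)))) = a2" using comp_w[of x] by (simp add: x_def x1_def x2_def)
      moreover have "snd (snd (fst (fst (F' x)))) = a3"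
        using comp_phi[of x] Dp2nz unfolding x_def Dphi_lin k_def by simp
      ultimately show ?thesis unfolding t by (simp add: prod_eq_iff)
    qed
    thus ?thesis unfolding T_eq by blast
  qed
  thus ?thesis by auto
qed


definition "\<tau> = cross3 r0 \<beta>"
lemma r0tau: "r0 \<bullet> \<tau> = 0" unfolding \<tau>_def by (simp add: dot_cross_self)
lemma btau: "\<beta> \<bullet> \<tau> = 0" unfolding \<tau>_def by (simp add: dot_cross_self)
lemma e2tau: "e2 \<bullet> \<tau> = 0" unfolding e2_def using r0tau btau by (simp add: inner_diff_left)
lemma taunz: "\<tau> \<noteq> 0"
proof
  assume "\<tau> = 0"
  hence "(r0 \<bullet> \<beta>)\<^sup>2 = (norm r0 * norm \<beta>)\<^sup>2" using norm_cross_dot[of r0 \<beta>] unfolding \<tau>_def by simp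
  hence "(\<rho> * c)\<^sup>2 = \<rho>\<^sup>2" using rb nb by (simp add: \<rho>_def)
  hence "\<rho>\<^sup>2 * (c * c) = \<rho>\<^sup>2 * 1" by (simp add: power2_eq_square algebra_simps)
  hence "c * c = 1" using rho by simp
  moreover have "c * c < 1 * 1" using cpos by (intro mult_strict_mono) auto
  ultimately show False by simp
qed

lemma Z_full: "\<exists>x. snd (snd (snd x)) = 0 \<and> D\<zeta> x = y"
proof -
  define Z where "Z = D\<zeta> ` {x. snd (snd (snd x)) = 0}"
  have subK: "subspace {x::par. snd (snd (snd x)) = 0}" unfolding subspace_def by (auto simp: zero_prod_def)
  have subZ: "subspace Z" unfolding Z_def using linDz subK by (rule linear_subspace_image)
  define w1 where "w1 = - e2"
  have w1Z: "w1 \<in> Z"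
  proof -
    let ?h = "(0, 0, 1, 0) :: par"
    have "Drr ?h = 0" by (simp add: Drr_def)
    hence "D\<rho> ?h = 0" "Drat ?h = 0" by (simp_all add: D\<rho>_def Drat_def)
    hence "D\<kappa> ?h = 0" by (simp add: D\<kappa>_def)
    hence "D\<zeta> ?h = w1" using \<open>Drr ?h = 0\<close> by (simp add: D\<zeta>_def w1_def e2_def)
    thus ?thesis unfolding Z_def by force
  qed
  define w2 where "w2 = - lam0 *\<^sub>R \<tau>"
  have w2Z: "w2 \<in> Z"
  proof -
    obtain k where k: "\<tau> = Db k" using Db_range btau by blast
    let ?h = "(0, k, 0, 0) :: par"
    have "Drr ?h = 0" by (simp add: Drr_def)
    hence "D\<rho> ?h = 0" "Drat ?h = 0" using r0tau k by (simp_all add: D\<rho>_def Drat_def)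
    hence "D\<kappa> ?h = 0" by (simp add: D\<kappa>_def)
    hence "D\<zeta> ?h = w2" using \<open>Drr ?h = 0\<close> k by (simp add: D\<zeta>_def w2_def)
    thus ?thesis unfolding Z_def by force
  qed
  obtain k3 where k3: "Du k3 \<bullet> \<zeta>0 \<noteq> 0"
  proof -
    have "\<not> (\<forall>h. Du h \<bullet> \<zeta>0 = 0)"
    proof
      assume a: "\<forall>h. Du h \<bullet> \<zeta>0 = 0"
      have "JT u v0 \<zeta>0 = 0" unfolding JT_def using a by (simp add: vec_eq_iff Du_def)
      thus False using K by simp
    qed
    thus ?thesis using that by blast
  qed
  define w3 where "w3 = D\<zeta> (k3, 0, 0, 0)"
  have w3Z: "w3 \<in> Z" unfolding Z_def w3_def by force
  have rw3: "r0 \<bullet> w3 = Du k3 \<bullet> \<zeta>0"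
    unfolding w3_def D\<zeta>_def D\<kappa>_def Drat_def D\<rho>_def \<zeta>0_def \<kappa>0_def Drr_def
    using rho rr_self l0
    by (simp add: inner_add_right inner_diff_right inner_diff_left inner_commute field_simps power2_eq_square)
  have rw1: "r0 \<bullet> w1 = 0" unfolding w1_def using r0e2 by simp
  have rw2: "r0 \<bullet> w2 = 0" unfolding w2_def using r0tau by simp
  have w12: "w1 \<bullet> w2 = 0" unfolding w1_def w2_def using e2tau by simp
  have w1nz: "w1 \<noteq> 0" unfolding w1_def using e2nz by simp
  have w2nz: "w2 \<noteq> 0" unfolding w2_def using taunz l0 by simp
  have w3r: "r0 \<bullet> w3 \<noteq> 0" using rw3 k3 by simp
  have ind12: "independent {w1, w2}"
    by (rule pairwise_orthogonal_independent) (use w12 w1nz w2nz in \<open>auto simp: pairwise_def orthogonal_def inner_commute\<close>)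
  have "w3 \<notin> span {w1, w2}"
  proof
    assume "w3 \<in> span {w1, w2}"
    hence "orthogonal r0 w3" by (rule orthogonal_to_span) (use rw1 rw2 in \<open>auto simp: orthogonal_def\<close>)
    thus False using w3r by (simp add: orthogonal_def)
  qed
  hence ind: "independent {w3, w1, w2}" using ind12 by (rule independent_insertI)
  have d12: "w1 \<noteq> w2" using w12 w1nz by auto
  have d3: "w3 \<noteq> w1" "w3 \<noteq> w2" using w3r rw1 rw2 by auto
  have card: "card {w3, w1, w2} = 3" using d12 d3 by simp
  have "(UNIV :: (real^3) set) \<subseteq> span {w3, w1, w2}"
    by (rule card_ge_dim_independent) (use ind card in auto)
  also have "span {w3, w1, w2} \<subseteq> Z" using w1Z w2Z w3Z subZ by (intro span_minimal) auto
  finally have "y \<in> Z" by blast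
  thus ?thesis unfolding Z_def by blast
qed

lemma snd_surj: "snd ` T = UNIV"
proof -
  have "p \<in> snd ` T" for p :: "(real^3) \<times> (real^3)"
  proof -
    obtain a y where p: "p = (a, y)" by (cases p) auto
    define x1 :: par where "x1 = (0, 0, 0, a)"
    obtain x2 where x2: "snd (snd (snd x2)) = 0" "D\<zeta> x2 = y - D\<zeta> x1" using Z_full by blast
    have "snd (F' (x1 + x2)) = p"
    proof -
      have "fst (snd (F' (x1 + x2))) = a" using comp_z[of "x1 + x2"] x2(1) by (simp add: x1_def)
      moreover have "snd (snd (F' (x1 + x2))) = y" using comp_zeta[of "x1 + x2"] x2(2) Dz_lin by simp
      ultimately show ?thesis unfolding p by (simp add: prod_eq_iff)
    qed
    thus ?thesis unfolding T_eq by blast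
  qed
  thus ?thesis by auto
qed

lemma dim_snd: "dim (snd ` T) = 6" unfolding snd_surj by simp

end

theorem mainTheorem12:
  fixes M S :: "(real^3) set" and \<epsilon> :: real
  assumes M_open: "open M" and M_conn: "connected M" and M_ne: "M \<noteq> {}"
    and S_surf: "regular_surface S" and S_ne: "S \<noteq> {}"
    and S_dist: "\<exists>d>0. \<forall>x\<in>S. \<forall>y\<in>closure M. d \<le> dist x y"
    and eps: "0 \<le> \<epsilon>" "\<epsilon> < pi/4"
    and tuy: "tuy_condition S M"
  shows "\<forall>U u W b. surface_chart S U u \<longrightarrow> surface_chart (sphere 0 1) W b \<longrightarrow>
     (\<forall>p \<in> CI_coords M \<epsilon> U u W b.
        let T = tangent_vectors (CI_coords M \<epsilon> U u W b) p in
          (\<lambda>q. fst (snd q)) ` T = UNIV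
        \<and> (\<lambda>q. fst (fst q)) ` T = UNIV
        \<and> dim (snd ` T) = 3 + 3
        \<and> dim (fst ` T) = 5 + 3)"
proof (intro allI impI ballI)
  fix U u W b p
  assume chu: "surface_chart S U u" and chb: "surface_chart (sphere 0 1) W b"
    and pC: "p \<in> CI_coords M \<epsilon> U u W b"
  obtain d where d: "d > 0" "\<forall>x\<in>S. \<forall>y\<in>closure M. d \<le> dist x y" using S_dist by blast
  have sep: "\<And>z x. z \<in> M \<Longrightarrow> x \<in> S \<Longrightarrow> z \<noteq> x"
  proof
    fix z x assume "z \<in> M" "x \<in> S" "z = x"
    hence "d \<le> dist x z" using d(2) closure_subset by blast
    thus False using d(1) \<open>z = x\<close> by simp
  qed
  obtain v0 w0 \<phi>0 uh bh \<phi>h z0 \<zeta> lam0 where P: "p = (((v0, w0, \<phi>0), (uh, bh, \<phi>h)), (z0, \<zeta>))"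
    and c: "v0 \<in> U" "w0 \<in> W" "\<phi>0 \<in> {\<epsilon> <..< pi/2 - \<epsilon>}" "z0 \<in> M"
       "phase (u v0) (b w0) \<phi>0 z0 = 0" "lam0 \<noteq> 0"
       "\<zeta> = - lam0 *\<^sub>R (b w0 - (cos \<phi>0 / norm (z0 - u v0)) *\<^sub>R (z0 - u v0))"
       "uh = JT u v0 \<zeta>" "bh = lam0 *\<^sub>R JT b w0 (z0 - u v0)" "\<phi>h = lam0 * norm (z0 - u v0) * sin \<phi>0"
    using pC unfolding CI_coords_def by blast
  interpret setting M S \<epsilon> U W u b v0 w0 \<phi>0 lam0 z0
    by unfold_locales (use M_open chu chb tuy sep c eps in auto)
  have pF: "p = Fmap u b p0"
    unfolding Fmap0 P using c by (simp add: \<zeta>0_def \<kappa>0_def c_def \<rho>_def r0_def \<beta>_def s_def)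
  have TT: "tangent_vectors (CI_coords M \<epsilon> U u W b) p = T" unfolding T_def C_def pF ..
  show "let T = tangent_vectors (CI_coords M \<epsilon> U u W b) p in
          (\<lambda>q. fst (snd q)) ` T = UNIV
        \<and> (\<lambda>q. fst (fst q)) ` T = UNIV
        \<and> dim (snd ` T) = 3 + 3
        \<and> dim (fst ` T) = 5 + 3"
    unfolding Let_def TT using z_surj base_surj dim_snd dim_fst by simp
qed

end
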